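(* Let $\mathcal{X}\subset\mathbb{R}^n$ be closed and convex, let $\Xi\subset\mathbb{R}^m$ be closed and convex, let $\beta\in(0,1)$, let $\varphi:\mathcal{X}\times\mathcal{X}\times\Xi\to\mathbb{R}$ be bounded and continuous, and let $\mathcal{Y}:\mathcal{X}\times\Xi\rightrightarrows\mathcal{X}$ be a nonempty-valued, compact-valued, continuous set-valued mapping. Let $\xi_1,\ldots,\xi_N\in\Xi$ and $\mu_N=\frac1N\sum_{i=1}^N\xi_i$. Suppose that $\mathcal{Y}(x,\xi)$ does not depend on $\xi$ and that $\xi\mapsto\varphi(x,y,\xi)$ is concave for every $x,y\in\mathcal{X}$. Then the MPC Bellman operator $B_{\mathrm{M}}$ is concavity preserving.
   Context: $C_b(\mathcal{X}\times\Xi)$ denotes the Banach space of bounded continuous real-valued functions on $\mathcal{X}\times\Xi$ with the sup norm. The MPC Bellman operator $B_{\mathrm{M}}:C_b(\mathcal{X}\times\Xi)\to C_b(\mathcal{X}\times\Xi)$ is $B_{\mathrm{M}}(f)(x,\xi)=\inf_{y\in\mathcal{Y}(x,\xi)}\{\varphi(x,y,\xi)+\beta f(y,\mu_N)\}$. $B_{\mathrm{M}}$ is called concavity preserving (resp. convexity preserving) if there exists a closed subset $\mathcal{F}\subset C_b(\mathcal{X}\times\Xi)$ such that $\xi\mapsto f(x,\xi)$ is concave (resp. convex) for every $x\in\mathcal{X}$ and $f\in\mathcal{F}$, and $B_{\mathrm{M}}(\mathcal{F})\subset\mathcal{F}$. *)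

theory Defs
  imports "HOL-Analysis.Analysis"
begin

text \<open>Elements of C_b(X x Xi): bounded continuous real functions on X x Xi,
  represented as curried HOL functions normalised to 0 outside X x Xi.\<close>
definition Cb :: "'a::topological_space set \<Rightarrow> 'b::topological_space set \<Rightarrow> ('a \<Rightarrow> 'b \<Rightarrow> real) set" where
  "Cb X Xi = {f. continuous_on (X \<times> Xi) (\<lambda>(x, xi). f x xi)
                 \<and> bounded ((\<lambda>(x, xi). f x xi) ` (X \<times> Xi))
                 \<and> (\<forall>x xi. (x, xi) \<notin> X \<times> Xi \<longrightarrow> f x xi = 0)}"

definition closed_Cb :: "'a::topological_space set \<Rightarrow> 'b::topological_space set \<Rightarrow> ('a \<Rightarrow> 'b \<Rightarrow> real) set \<Rightarrow> bool" where
  "closed_Cb X Xi F \<longleftrightarrow> F \<subseteq> Cb X Xi \<and>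
     (\<forall>g f. (\<forall>k. g k \<in> F) \<and> f \<in> Cb X Xi \<and>
        (\<forall>e>0. \<forall>\<^sub>F k in sequentially. \<forall>x\<in>X. \<forall>xi\<in>Xi. \<bar>g k x xi - f x xi\<bar> < e)
        \<longrightarrow> f \<in> F)"

definition BM :: "'a set \<Rightarrow> 'b set \<Rightarrow> ('a \<Rightarrow> 'b \<Rightarrow> 'a set) \<Rightarrow> ('a \<Rightarrow> 'a \<Rightarrow> 'b \<Rightarrow> real)
                  \<Rightarrow> real \<Rightarrow> 'b \<Rightarrow> ('a \<Rightarrow> 'b \<Rightarrow> real) \<Rightarrow> ('a \<Rightarrow> 'b \<Rightarrow> real)" where
  "BM X Xi Y phi beta mu f = (\<lambda>x xi. if x \<in> X \<and> xi \<in> Xi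
       then Inf ((\<lambda>y. phi x y xi + beta * f y mu) ` Y x xi) else 0)"

definition concavity_preserving :: "'a::topological_space set \<Rightarrow> 'b::real_normed_vector set \<Rightarrow> ('a \<Rightarrow> 'b \<Rightarrow> 'a set)
     \<Rightarrow> ('a \<Rightarrow> 'a \<Rightarrow> 'b \<Rightarrow> real) \<Rightarrow> real \<Rightarrow> 'b \<Rightarrow> bool" where
  "concavity_preserving X Xi Y phi beta mu \<longleftrightarrow>
     (\<exists>F. F \<noteq> {} \<and> closed_Cb X Xi F \<and> (\<forall>f\<in>F. \<forall>x\<in>X. concave_on Xi (f x))
          \<and> BM X Xi Y phi beta mu ` F \<subseteq> F)"

definition uhc_on :: "'p::topological_space set \<Rightarrow> ('p \<Rightarrow> 'q::topological_space set) \<Rightarrow> bool" where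
  "uhc_on D Y \<longleftrightarrow> (\<forall>p\<in>D. \<forall>U. open U \<and> Y p \<subseteq> U \<longrightarrow>
       (\<exists>V. open V \<and> p \<in> V \<and> (\<forall>q\<in>V \<inter> D. Y q \<subseteq> U)))"

definition lhc_on :: "'p::topological_space set \<Rightarrow> ('p \<Rightarrow> 'q::topological_space set) \<Rightarrow> bool" where
  "lhc_on D Y \<longleftrightarrow> (\<forall>p\<in>D. \<forall>U. open U \<and> Y p \<inter> U \<noteq> {} \<longrightarrow>
       (\<exists>V. open V \<and> p \<in> V \<and> (\<forall>q\<in>V \<inter> D. Y q \<inter> U \<noteq> {})))"

end

theory Submission imports Defs begin

lemma dist_pair_le: "dist (a, b) (c, d) \<le> dist a c + dist b d"
proof -
  have "dist (a, b) (c, d) \<le> dist (a, b) (c, b) + dist (c, b) (c, d)" by (rule dist_triangle)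
  also have "\<dots> = dist a c + dist b d" by (simp add: dist_Pair_Pair)
  finally show ?thesis .
qed

lemma berge:
  fixes D :: "'p::metric_space set" and Z :: "'y::metric_space set"
    and h :: "'p \<Rightarrow> 'y \<Rightarrow> real" and Y :: "'p \<Rightarrow> 'y set"
  assumes cont: "continuous_on (D \<times> Z) (\<lambda>z. h (fst z) (snd z))"
    and bdd: "\<And>p y. p \<in> D \<Longrightarrow> y \<in> Z \<Longrightarrow> \<bar>h p y\<bar> \<le> K"
    and ne: "\<forall>p\<in>D. Y p \<noteq> {} \<and> compact (Y p) \<and> Y p \<subseteq> Z"
    and u: "uhc_on D Y" and l: "lhc_on D Y"
  shows "continuous_on D (\<lambda>p. Inf (h p ` Y p))"
  unfolding continuous_on_iff
proof (intro ballI allI impI)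
  fix p e assume p: "p \<in> D" and e: "(0::real) < e"
  define v where "v = (\<lambda>p. Inf (h p ` Y p))"
  have bb: "bdd_below (h q ` Y q)" if "q \<in> D" for q
  proof (rule bdd_belowI)
    fix z assume "z \<in> h q ` Y q"
    then obtain y where "y \<in> Y q" "z = h q y" by auto
    moreover have "y \<in> Z" using ne that \<open>y \<in> Y q\<close> by blast
    ultimately show "- K \<le> z" using bdd[of q y] that by (simp add: abs_le_iff)
  qed
  have contp: "\<exists>d>0. \<forall>q\<in>D. \<forall>y'\<in>Z. dist q p + dist y' y < d \<longrightarrow> \<bar>h q y' - h p y\<bar> < e'"
    if "y \<in> Z" "e' > 0" for y e'
  proof -
    have pyD: "(p, y) \<in> D \<times> Z" using p that by auto
    obtain d where d: "d > 0"
      "\<forall>x'\<in>D \<times> Z. dist x' (p, y) < d \<longrightarrow> dist ((\<lambda>z. h (fst z) (snd z)) x') ((\<lambda>z. h (fst z) (snd z)) (p, y)) < e'"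
      using cont[unfolded continuous_on_iff, rule_format, OF pyD \<open>e' > 0\<close>] by blast
    show ?thesis
    proof (intro exI[of _ d] conjI ballI impI)
      fix q y' assume "q \<in> D" "y' \<in> Z" "dist q p + dist y' y < d"
      then have "(q, y') \<in> D \<times> Z" "dist (q, y') (p, y) < d"
        using dist_pair_le[of q y' p y] by auto
      from d(2)[rule_format, OF this] show "\<bar>h q y' - h p y\<bar> < e'"
        by (simp add: dist_real_def)
    qed (use d in auto)
  qed
  obtain V1 d1 where V1: "open V1" "p \<in> V1" "d1 > 0" "\<forall>q\<in>V1 \<inter> D. dist q p < d1 \<longrightarrow> v q < v p + e"
  proof -
    have "v p < v p + e/2" using e by simp
    moreover have "Y p \<noteq> {}" using ne p by blast
    then have "h p ` Y p \<noteq> {}" by simp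
    ultimately obtain z where "z \<in> h p ` Y p" "z < v p + e/2"
      unfolding v_def by (meson cInf_lessD)
    then obtain y0 where y0: "y0 \<in> Y p" "h p y0 < v p + e/2" by blast
    have y0Z: "y0 \<in> Z" using ne p y0 by blast
    obtain d where d: "d > 0" "\<forall>q\<in>D. \<forall>y'\<in>Z. dist q p + dist y' y0 < d \<longrightarrow> \<bar>h q y' - h p y0\<bar> < e/2"
      using contp[OF y0Z, of "e/2"] e by auto
    obtain V where V: "open V" "p \<in> V" "\<forall>q\<in>V \<inter> D. Y q \<inter> ball y0 (d/2) \<noteq> {}"
    proof -
      have "Y p \<inter> ball y0 (d/2) \<noteq> {}" using y0 d(1) by auto
      from l[unfolded lhc_on_def, rule_format, OF p conjI[OF open_ball this]]
      show ?thesis using that by blast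
    qed
    show ?thesis
    proof (rule that[OF V(1,2), of "d/2"])
      show "\<forall>q\<in>V \<inter> D. dist q p < d / 2 \<longrightarrow> v q < v p + e"
      proof (intro ballI impI)
        fix q assume q: "q \<in> V \<inter> D" "dist q p < d/2"
        have "Y q \<inter> ball y0 (d/2) \<noteq> {}" using V(3) q by blast
        then obtain y where y: "y \<in> Y q" "dist y0 y < d/2" by auto
        have yZ: "y \<in> Z" using ne q y by blast
        have "\<bar>h q y - h p y0\<bar> < e/2" using d(2) q y yZ by (simp add: dist_commute)
        moreover have "v q \<le> h q y" unfolding v_def using bb q y by (auto intro: cInf_lower)
        ultimately show "v q < v p + e" using y0 by linarith
      qed
    qed (use d in auto)
  qed
  obtain V2 d2 where V2: "open V2" "p \<in> V2" "d2 > 0" "\<forall>q\<in>V2 \<inter> D. dist q p < d2 \<longrightarrow> v p - e < v q"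
  proof -
    have "\<forall>y\<in>Y p. \<exists>d>0. \<forall>q\<in>D. \<forall>y'\<in>Z. dist q p + dist y' y < d \<longrightarrow> \<bar>h q y' - h p y\<bar> < e/2"
    proof
      fix y assume "y \<in> Y p"
      then have "y \<in> Z" using ne p by blast
      then show "\<exists>d>0. \<forall>q\<in>D. \<forall>y'\<in>Z. dist q p + dist y' y < d \<longrightarrow> \<bar>h q y' - h p y\<bar> < e/2"
        using contp[of y "e/2"] e by simp
    qed
    from bchoice[OF this] obtain dd where dd: "\<forall>y\<in>Y p. dd y > 0 \<and> (\<forall>q\<in>D. \<forall>y'\<in>Z. dist q p + dist y' y < dd y \<longrightarrow> \<bar>h q y' - h p y\<bar> < e/2)"
      by blast
    have cpt: "compact (Y p)" using ne p by blast
    obtain C where C: "C \<subseteq> Y p" "finite C" "Y p \<subseteq> (\<Union>c\<in>C. ball c (dd c / 2))"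
    proof (rule compactE_image[OF cpt, of "Y p" "\<lambda>c. ball c (dd c / 2)"])
      show "Y p \<subseteq> (\<Union>c\<in>Y p. ball c (dd c / 2))"
      proof
        fix y assume "y \<in> Y p"
        then have "y \<in> ball y (dd y / 2)" using dd by auto
        then show "y \<in> (\<Union>c\<in>Y p. ball c (dd c / 2))" using \<open>y \<in> Y p\<close> by blast
      qed
    qed auto
    define U where "U = (\<Union>c\<in>C. ball c (dd c / 2))"
    obtain V where V: "open V" "p \<in> V" "\<forall>q\<in>V \<inter> D. Y q \<subseteq> U"
    proof -
      have "open U" unfolding U_def by auto
      then show ?thesis using u p C(3) that unfolding uhc_on_def U_def by meson
    qed
    define d where "d = Min (insert 1 ((\<lambda>c. dd c / 2) ` C))"
    have dpos: "d > 0" unfolding d_def using C dd by (subst Min_gr_iff) auto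
    have dle: "d \<le> dd c / 2" if "c \<in> C" for c unfolding d_def using C that by (intro Min_le) auto
    show ?thesis
    proof (rule that[OF V(1,2) dpos], intro ballI impI)
      fix q assume q: "q \<in> V \<inter> D" "dist q p < d"
      have "v p - e/2 \<le> h q y'" if y': "y' \<in> Y q" for y'
      proof -
        have "y' \<in> U" using y' V(3) q by blast
        then obtain c where c: "c \<in> C" "dist c y' < dd c / 2" unfolding U_def by auto
        have y'Z: "y' \<in> Z" using ne q y' by blast
        have "dist q p + dist y' c < dd c" using c dle[OF c(1)] q by (simp add: dist_commute)
        then have "\<bar>h q y' - h p c\<bar> < e/2" using dd c C q y'Z by auto
        moreover have "c \<in> Y p" using c C by blast
        then have "v p \<le> h p c" unfolding v_def using bb[OF p] by (auto intro: cInf_lower)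
        ultimately show ?thesis by linarith
      qed
      moreover have "Y q \<noteq> {}" using ne q by blast
      ultimately have "v p - e/2 \<le> v q" unfolding v_def by (auto intro: cInf_greatest)
      then show "v p - e < v q" using e by linarith
    qed
  qed
  obtain r where r: "r > 0" "ball p r \<subseteq> V1 \<inter> V2" using V1 V2 by (meson open_Int open_contains_ball IntI)
  show "\<exists>d>0. \<forall>q\<in>D. dist q p < d \<longrightarrow> dist (Inf (h q ` Y q)) (Inf (h p ` Y p)) < e"
  proof (intro exI[of _ "min r (min d1 d2)"] conjI ballI impI)
    fix q assume q: "q \<in> D" "dist q p < min r (min d1 d2)"
    then have "q \<in> V1 \<inter> V2" using r by (auto simp: dist_commute)
    then show "dist (Inf (h q ` Y q)) (Inf (h p ` Y p)) < e"
    proof -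
      have "v q < v p + e" "v p - e < v q" using V1(4) V2(4) q \<open>q \<in> V1 \<inter> V2\<close> by auto
      then show ?thesis unfolding v_def dist_real_def by linarith
    qed
  qed (use r V1 V2 in auto)
qed



lemma abs_Inf_le:
  fixes S :: "real set"
  assumes "S \<noteq> {}" "\<And>s. s \<in> S \<Longrightarrow> \<bar>s\<bar> \<le> K"
  shows "bdd_below S" "\<bar>Inf S\<bar> \<le> K"
proof -
  show bb: "bdd_below S"
  proof (rule bdd_belowI)
    fix s assume "s \<in> S" then show "- K \<le> s" using assms(2)[of s] by (simp add: abs_le_iff)
  qed
  have "- K \<le> Inf S"
  proof (rule cInf_greatest[OF assms(1)])
    fix s assume "s \<in> S" then show "- K \<le> s" using assms(2)[of s] by (simp add: abs_le_iff)
  qed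
  moreover obtain s where s: "s \<in> S" using assms(1) by blast
  have "Inf S \<le> s" by (rule cInf_lower[OF s bb])
  moreover have "s \<le> K" using assms(2)[OF s] by (simp add: abs_le_iff)
  ultimately show "\<bar>Inf S\<bar> \<le> K" by (simp add: abs_le_iff)
qed

theorem proposition1:
  fixes X :: "(real^'n) set" and Xi :: "(real^'m) set"
    and beta :: real
    and phi :: "real^'n \<Rightarrow> real^'n \<Rightarrow> real^'m \<Rightarrow> real"
    and Y :: "real^'n \<Rightarrow> real^'m \<Rightarrow> (real^'n) set"
    and N :: nat and xis :: "nat \<Rightarrow> real^'m"
  assumes "closed X" "convex X" "closed Xi" "convex Xi"
    and "0 < beta" "beta < 1"
    and "bounded ((\<lambda>(x, y, xi). phi x y xi) ` (X \<times> X \<times> Xi))"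
    and "continuous_on (X \<times> X \<times> Xi) (\<lambda>(x, y, xi). phi x y xi)"
    and "\<forall>x\<in>X. \<forall>xi\<in>Xi. Y x xi \<noteq> {} \<and> compact (Y x xi) \<and> Y x xi \<subseteq> X"
    and "uhc_on (X \<times> Xi) (\<lambda>(x, xi). Y x xi)"
    and "lhc_on (X \<times> Xi) (\<lambda>(x, xi). Y x xi)"
    and "N \<ge> 1" "\<forall>i\<in>{1..N}. xis i \<in> Xi"
    and "\<forall>x\<in>X. \<forall>xi\<in>Xi. \<forall>xi'\<in>Xi. Y x xi = Y x xi'"
    and "\<forall>x\<in>X. \<forall>y\<in>X. concave_on Xi (phi x y)"
  shows "concavity_preserving X Xi Y phi beta ((1 / real N) *\<^sub>R (\<Sum>i=1..N. xis i))"
proof -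
  note cvXi = assms(4)
  note Yprop = assms(9)
  define mu where "mu = (1 / real N) *\<^sub>R (\<Sum>i=1..N. xis i)"
  have muXi: "mu \<in> Xi"
  proof -
    have "mu = (\<Sum>i\<in>{1..N}. (1 / real N) *\<^sub>R xis i)" unfolding mu_def by (simp add: scaleR_sum_right)
    also have "\<dots> \<in> Xi"
      by (rule convex_sum) (use assms(12,13) cvXi in auto)
    finally show ?thesis .
  qed
  obtain Kp where Kp: "\<And>x y xi. x \<in> X \<Longrightarrow> y \<in> X \<Longrightarrow> xi \<in> Xi \<Longrightarrow> \<bar>phi x y xi\<bar> \<le> Kp"
  proof -
    from assms(7) obtain B where B: "\<forall>z\<in>(\<lambda>(x, y, xi). phi x y xi) ` (X \<times> X \<times> Xi). norm z \<le> B"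
      unfolding bounded_iff by blast
    show ?thesis
    proof (rule that)
      fix x y xi assume "x \<in> X" "y \<in> X" "xi \<in> Xi"
      then have "phi x y xi \<in> (\<lambda>(x, y, xi). phi x y xi) ` (X \<times> X \<times> Xi)"
        by (intro image_eqI[of _ _ "(x, y, xi)"]) auto
      then show "\<bar>phi x y xi\<bar> \<le> B" using B by fastforce
    qed
  qed
  define F where "F = {f \<in> Cb X Xi. \<forall>x\<in>X. concave_on Xi (f x)}"
  have zeroF: "(\<lambda>x xi. 0) \<in> F"
  proof -
    have "(\<lambda>x xi. 0::real) \<in> Cb X Xi" unfolding Cb_def
    proof (intro CollectI conjI allI impI)
      show "continuous_on (X \<times> Xi) (\<lambda>(x, xi). 0::real)" by (simp add: case_prod_beta')
      have "(\<lambda>(x, xi). 0::real) ` (X \<times> Xi) \<subseteq> {0}" by auto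
      then show "bounded ((\<lambda>(x, xi). 0::real) ` (X \<times> Xi))" by (meson bounded_subset finite_imp_bounded finite.intros)
    qed auto
    then show ?thesis unfolding F_def using cvXi by (simp add: concave_on_const)
  qed
  have closedF: "closed_Cb X Xi F"
    unfolding closed_Cb_def
  proof (intro conjI allI impI)
    show "F \<subseteq> Cb X Xi" unfolding F_def by blast
    fix g f
    assume H: "(\<forall>k. g k \<in> F) \<and> f \<in> Cb X Xi \<and>
        (\<forall>e>0. \<forall>\<^sub>F k in sequentially. \<forall>x\<in>X. \<forall>xi\<in>Xi. \<bar>g k x xi - f x xi\<bar> < e)"
    have "concave_on Xi (f x)" if x: "x \<in> X" for x
      unfolding concave_on_iff
    proof (intro conjI ballI allI impI cvXi)
      fix a b and u v :: real
      assume a: "a \<in> Xi" and b: "b \<in> Xi" and u: "u \<ge> 0" and v: "v \<ge> 0" and uv: "u + v = 1"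
      have c: "u *\<^sub>R a + v *\<^sub>R b \<in> Xi" using convexD[OF cvXi a b u v uv] .
      show "u * f x a + v * f x b \<le> f x (u *\<^sub>R a + v *\<^sub>R b)"
      proof (rule ccontr)
        assume neg: "\<not> ?thesis"
        define e where "e = (u * f x a + v * f x b - f x (u *\<^sub>R a + v *\<^sub>R b)) / 3"
        have e: "e > 0" unfolding e_def using neg by simp
        have Hev: "\<forall>\<^sub>F k in sequentially. \<forall>x\<in>X. \<forall>xi\<in>Xi. \<bar>g k x xi - f x xi\<bar> < e"
          using H e by simp
        then obtain k0 where k0: "\<And>k. k \<ge> k0 \<Longrightarrow> \<forall>x\<in>X. \<forall>xi\<in>Xi. \<bar>g k x xi - f x xi\<bar> < e"
          unfolding eventually_sequentially by blast
        have kk: "\<forall>x\<in>X. \<forall>xi\<in>Xi. \<bar>g k0 x xi - f x xi\<bar> < e" using k0[of k0] by simp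
        have ga: "\<bar>g k0 x a - f x a\<bar> < e" using kk x a by blast
        have gb: "\<bar>g k0 x b - f x b\<bar> < e" using kk x b by blast
        have gc: "\<bar>g k0 x (u *\<^sub>R a + v *\<^sub>R b) - f x (u *\<^sub>R a + v *\<^sub>R b)\<bar> < e"
          using kk x c by blast
        have "g k0 \<in> F" using H by simp
        then have "concave_on Xi (g k0 x)" using x unfolding F_def by blast
        from concave_onD[OF this, of v a b] have conc: "u * g k0 x a + v * g k0 x b \<le> g k0 x (u *\<^sub>R a + v *\<^sub>R b)"
          using a b u v uv by (simp add: eq_diff_eq[symmetric])
        have "u * (f x a - e) \<le> u * g k0 x a" using ga u by (intro mult_left_mono) auto
        moreover have "v * (f x b - e) \<le> v * g k0 x b" using gb v by (intro mult_left_mono) auto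
        moreover have "u * (f x a - e) + v * (f x b - e) = u * f x a + v * f x b - e"
        proof -
          have "u * (f x a - e) + v * (f x b - e) = u * f x a + v * f x b - (u + v) * e"
            by (simp add: algebra_simps)
          then show ?thesis using uv by simp
        qed
        moreover have "g k0 x (u *\<^sub>R a + v *\<^sub>R b) < f x (u *\<^sub>R a + v *\<^sub>R b) + e"
          using gc by (simp add: abs_less_iff)
        moreover have "3 * e = u * f x a + v * f x b - f x (u *\<^sub>R a + v *\<^sub>R b)"
          unfolding e_def by simp
        ultimately show False using conc e by linarith
      qed
    qed
    then show "f \<in> F" unfolding F_def using H by blast
  qed
  have inv: "BM X Xi Y phi beta mu f \<in> F" if fF: "f \<in> F" for f
  proof -
    have fC: "f \<in> Cb X Xi" using fF unfolding F_def by blast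
    obtain Kf where Kf: "\<And>x xi. x \<in> X \<Longrightarrow> xi \<in> Xi \<Longrightarrow> \<bar>f x xi\<bar> \<le> Kf"
    proof -
      from fC obtain B where B: "\<forall>z\<in>(\<lambda>(x, xi). f x xi) ` (X \<times> Xi). norm z \<le> B"
        unfolding Cb_def bounded_iff by blast
      show ?thesis
      proof (rule that)
        fix x xi assume "x \<in> X" "xi \<in> Xi"
        then have "f x xi \<in> (\<lambda>(x, xi). f x xi) ` (X \<times> Xi)"
          by (intro image_eqI[of _ _ "(x, xi)"]) auto
        then show "\<bar>f x xi\<bar> \<le> B" using B by fastforce
      qed
    qed
    define h where "h = (\<lambda>p y. phi (fst p) y (snd p) + beta * f y mu)"
    define Y' where "Y' = (\<lambda>(x::real^'n, xi::real^'m). Y x xi)"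
    define K where "K = Kp + beta * Kf"
    have hb: "\<bar>h p y\<bar> \<le> K" if "p \<in> X \<times> Xi" "y \<in> X" for p y
    proof -
      have "\<bar>phi (fst p) y (snd p)\<bar> \<le> Kp" using Kp that by (cases p) auto
      moreover have "\<bar>f y mu\<bar> \<le> Kf" using Kf that muXi by auto
      then have "\<bar>beta * f y mu\<bar> \<le> beta * Kf" using assms(5) by (simp add: abs_mult)
      ultimately show ?thesis unfolding h_def K_def by linarith
    qed
    have hcont: "continuous_on ((X \<times> Xi) \<times> X) (\<lambda>z. h (fst z) (snd z))"
    proof -
      have c1: "continuous_on ((X \<times> Xi) \<times> X) (\<lambda>z. (\<lambda>(x, y, xi). phi x y xi) (fst (fst z), snd z, snd (fst z)))"
        by (rule continuous_on_compose2[OF assms(8)]) (auto intro!: continuous_intros)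
      have fc: "continuous_on (X \<times> Xi) (\<lambda>(x, xi). f x xi)" using fC unfolding Cb_def by blast
      have c2: "continuous_on ((X \<times> Xi) \<times> X) (\<lambda>z. (\<lambda>(x, xi). f x xi) (snd z, mu))"
        by (rule continuous_on_compose2[OF fc]) (use muXi in \<open>auto intro!: continuous_intros\<close>)
      have "continuous_on ((X \<times> Xi) \<times> X) (\<lambda>z. (\<lambda>(x, y, xi). phi x y xi) (fst (fst z), snd z, snd (fst z)) + beta * (\<lambda>(x, xi). f x xi) (snd z, mu))"
        by (intro continuous_intros c1 c2)
      then show ?thesis unfolding h_def by simp
    qed
    have berg: "continuous_on (X \<times> Xi) (\<lambda>p. Inf (h p ` Y' p))"
    proof (rule berge[OF hcont, of K])
      show "\<And>p y. p \<in> X \<times> Xi \<Longrightarrow> y \<in> X \<Longrightarrow> \<bar>h p y\<bar> \<le> K" using hb by blast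
      show "\<forall>p\<in>X \<times> Xi. Y' p \<noteq> {} \<and> compact (Y' p) \<and> Y' p \<subseteq> X" using Yprop unfolding Y'_def by auto
      show "uhc_on (X \<times> Xi) Y'" using assms(10) unfolding Y'_def .
      show "lhc_on (X \<times> Xi) Y'" using assms(11) unfolding Y'_def .
    qed
    have BMeq: "BM X Xi Y phi beta mu f x xi = Inf (h (x, xi) ` Y' (x, xi))" if "x \<in> X" "xi \<in> Xi" for x xi
      using that unfolding BM_def h_def Y'_def by simp
    have Sne: "h (x, xi) ` Y' (x, xi) \<noteq> {}" if "x \<in> X" "xi \<in> Xi" for x xi
      using Yprop that unfolding Y'_def by auto
    have Sb: "\<And>s. s \<in> h (x, xi) ` Y' (x, xi) \<Longrightarrow> \<bar>s\<bar> \<le> K" if "x \<in> X" "xi \<in> Xi" for x xi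
      using Yprop that hb unfolding Y'_def by fastforce
    have "BM X Xi Y phi beta mu f \<in> Cb X Xi" unfolding Cb_def
    proof (intro CollectI conjI allI impI)
      show "continuous_on (X \<times> Xi) (\<lambda>(x, xi). BM X Xi Y phi beta mu f x xi)"
        using berg by (rule continuous_on_eq) (auto simp: BMeq)
      have "\<forall>z\<in>(\<lambda>(x, xi). BM X Xi Y phi beta mu f x xi) ` (X \<times> Xi). norm z \<le> K"
        using abs_Inf_le(2)[OF Sne Sb] by (auto simp: BMeq)
      then show "bounded ((\<lambda>(x, xi). BM X Xi Y phi beta mu f x xi) ` (X \<times> Xi))"
        unfolding bounded_iff by blast
      fix x xi assume "(x, xi) \<notin> X \<times> Xi"
      then show "BM X Xi Y phi beta mu f x xi = 0" unfolding BM_def by auto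
    qed
    moreover have "concave_on Xi (BM X Xi Y phi beta mu f x)" if x: "x \<in> X" for x
      unfolding concave_on_iff
    proof (intro conjI ballI allI impI cvXi)
      fix a b and u v :: real
      assume a: "a \<in> Xi" and b: "b \<in> Xi" and u: "u \<ge> 0" and v: "v \<ge> 0" and uv: "u + v = 1"
      define c where "c = u *\<^sub>R a + v *\<^sub>R b"
      have c: "c \<in> Xi" unfolding c_def using convexD[OF cvXi a b u v uv] .
      have Ya: "Y' (x, a) = Y x c" using assms(14)[rule_format, OF x a c] unfolding Y'_def by (simp only: case_prod_conv)
      have Yb: "Y' (x, b) = Y x c" using assms(14)[rule_format, OF x b c] unfolding Y'_def by (simp only: case_prod_conv)
      have Yc: "Y' (x, c) = Y x c" unfolding Y'_def by simp
      have "u * Inf (h (x, a) ` Y' (x, a)) + v * Inf (h (x, b) ` Y' (x, b)) \<le> Inf (h (x, c) ` Y' (x, c))"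
      proof (rule cInf_greatest[OF Sne[OF x c]])
        fix s assume "s \<in> h (x, c) ` Y' (x, c)"
        then obtain y where y: "y \<in> Y x c" "s = h (x, c) y" unfolding Yc by blast
        have "Y x c \<subseteq> X" using Yprop x c by blast
        then have yX: "y \<in> X" using y by blast
        have "Inf (h (x, a) ` Y' (x, a)) \<le> h (x, a) y"
        proof (rule cInf_lower)
          show "h (x, a) y \<in> h (x, a) ` Y' (x, a)" unfolding Ya using y(1) by (rule imageI)
          show "bdd_below (h (x, a) ` Y' (x, a))" by (rule abs_Inf_le(1)[OF Sne[OF x a] Sb[OF x a]])
        qed
        then have ia: "u * Inf (h (x, a) ` Y' (x, a)) \<le> u * h (x, a) y" using u by (rule mult_left_mono)
        have "Inf (h (x, b) ` Y' (x, b)) \<le> h (x, b) y"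
        proof (rule cInf_lower)
          show "h (x, b) y \<in> h (x, b) ` Y' (x, b)" unfolding Yb using y(1) by (rule imageI)
          show "bdd_below (h (x, b) ` Y' (x, b))" by (rule abs_Inf_le(1)[OF Sne[OF x b] Sb[OF x b]])
        qed
        then have ib: "v * Inf (h (x, b) ` Y' (x, b)) \<le> v * h (x, b) y" using v by (rule mult_left_mono)
        have "concave_on Xi (phi x y)" using assms(15) x yX by blast
        then have pc: "u * phi x y a + v * phi x y b \<le> phi x y c"
          unfolding concave_on_iff c_def using a b u v uv by blast
        have "u * h (x, a) y + v * h (x, b) y = u * phi x y a + v * phi x y b + (u + v) * (beta * f y mu)"
          unfolding h_def by (simp add: algebra_simps)
        also have "\<dots> \<le> h (x, c) y" using pc uv unfolding h_def by simp
        finally show "u * Inf (h (x, a) ` Y' (x, a)) + v * Inf (h (x, b) ` Y' (x, b)) \<le> s"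
          using ia ib y by linarith
      qed
      then show "u * BM X Xi Y phi beta mu f x a + v * BM X Xi Y phi beta mu f x b
                 \<le> BM X Xi Y phi beta mu f x (u *\<^sub>R a + v *\<^sub>R b)"
        using BMeq x a b c unfolding c_def by simp
    qed
    ultimately show ?thesis unfolding F_def by blast
  qed
  show ?thesis unfolding concavity_preserving_def mu_def[symmetric]
    using zeroF closedF inv by (intro exI[of _ F]) (auto simp: F_def)
qed

end
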